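(* Let $(v_k)$ be a weakly null sequence in a Banach space $V$. Then for every $\varepsilon>0$ there exist integers $k_0<\dots<k_j$ and $\lambda_0,\dots,\lambda_j\ge0$ with $\sum_{i=0}^j\lambda_i=1$ such that $\max_{0\le i\le j}\lambda_i\le\varepsilon$ and $\max\{\|\sum_{i\in F}\lambda_iv_{k_i}\|: F\subseteq\{0,\dots,j\}\}\le\varepsilon$. *)

theory Defs
  imports "HOL-Analysis.Analysis"
begin

definition weakly_null :: "(nat \<Rightarrow> 'a::real_normed_vector) \<Rightarrow> bool" where
  "weakly_null v \<longleftrightarrow> (\<forall>f::'a \<Rightarrow> real. bounded_linear f \<longrightarrow> (\<lambda>k. f (v k)) \<longlonglongrightarrow> 0)"

end

theory Submission
  imports Defs
begin

definition hbgood :: "'a::real_normed_vector \<Rightarrow> ('a \<times> real) set \<Rightarrow> bool" where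
 "hbgood w G \<longleftrightarrow> (w, norm w) \<in> G \<and> (\<forall>x a b. (x,a)\<in>G \<longrightarrow> (x,b)\<in>G \<longrightarrow> a = b)
   \<and> (\<forall>x y a b. (x,a)\<in>G \<longrightarrow> (y,b)\<in>G \<longrightarrow> (x+y,a+b)\<in>G)
   \<and> (\<forall>x a c. (x,a)\<in>G \<longrightarrow> (c *\<^sub>R x, c*a)\<in>G) \<and> (\<forall>x a. (x,a)\<in>G \<longrightarrow> a \<le> norm x)"

definition hb0 :: "'a::real_normed_vector \<Rightarrow> ('a \<times> real) set" where
  "hb0 w = {(t *\<^sub>R w, t * norm w) | t. True}"

lemma hb0_good: "hbgood w (hb0 w)"
proof -
  have fn: "a = b" if "(x,a) \<in> hb0 w" "(x,b) \<in> hb0 w" for x a b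
  proof -
    from that obtain t s where "x = t *\<^sub>R w" "a = t * norm w" "x = s *\<^sub>R w" "b = s * norm w"
      unfolding hb0_def by blast
    then show ?thesis by (cases "w = 0") auto
  qed
  show ?thesis unfolding hbgood_def
  proof (intro conjI allI impI)
    show "(w, norm w) \<in> hb0 w" unfolding hb0_def by (auto intro: exI[of _ 1])
  next
    fix x y a b assume "(x,a) \<in> hb0 w" "(y,b) \<in> hb0 w"
    then obtain t s where "x = t *\<^sub>R w" "a = t * norm w" "y = s *\<^sub>R w" "b = s * norm w"
      unfolding hb0_def by blast
    then have "(x+y,a+b) = ((t+s) *\<^sub>R w, (t+s) * norm w)" by (simp add: scaleR_add_left distrib_right)
    then show "(x+y,a+b) \<in> hb0 w" unfolding hb0_def by blast
  next
    fix x a c assume "(x,a) \<in> hb0 w"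
    then obtain t where "x = t *\<^sub>R w" "a = t * norm w" unfolding hb0_def by blast
    then have "(c *\<^sub>R x, c*a) = ((c*t) *\<^sub>R w, (c*t) * norm w)" by simp
    then show "(c *\<^sub>R x, c*a) \<in> hb0 w" unfolding hb0_def by blast
  next
    fix x a assume "(x,a) \<in> hb0 w"
    then obtain t where "x = t *\<^sub>R w" "a = t * norm w" unfolding hb0_def by blast
    then show "a \<le> norm x" by (simp add: mult_right_mono)
  qed (use fn in blast)
qed

lemma hbgood_hb0: "hbgood w G \<Longrightarrow> hb0 w \<subseteq> G"
  unfolding hbgood_def hb0_def by blast

lemma hbgoodD:
  assumes "hbgood w G"
  shows "(w, norm w) \<in> G" "\<And>x a b. (x,a)\<in>G \<Longrightarrow> (x,b)\<in>G \<Longrightarrow> a = b"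
   "\<And>x y a b. (x,a)\<in>G \<Longrightarrow> (y,b)\<in>G \<Longrightarrow> (x+y,a+b)\<in>G"
   "\<And>x a c. (x,a)\<in>G \<Longrightarrow> (c *\<^sub>R x, c*a)\<in>G" "\<And>x a. (x,a)\<in>G \<Longrightarrow> a \<le> norm x"
  using assms unfolding hbgood_def by blast+

lemma hb_chain:
  assumes "C \<in> chains {G. hbgood w G}"
  shows "\<exists>U\<in>{G. hbgood w G}. \<forall>X\<in>C. X \<subseteq> U"
proof (cases "C = {}")
  case True then show ?thesis using hb0_good by auto
next
  case False
  have ch1: "\<And>X. X\<in>C \<Longrightarrow> hbgood w X" and ch2: "\<And>X Y. X\<in>C \<Longrightarrow> Y\<in>C \<Longrightarrow> X \<subseteq> Y \<or> Y \<subseteq> X"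
    using assms unfolding chains_def chain_subset_def by auto
  have two: "\<exists>X\<in>C. p \<in> X \<and> q \<in> X" if "p \<in> \<Union>C" "q \<in> \<Union>C" for p q
  proof -
    from that obtain X Y where "X \<in> C" "Y \<in> C" "p \<in> X" "q \<in> Y" by blast
    then show ?thesis using ch2[of X Y] by blast
  qed
  have "hbgood w (\<Union>C)" unfolding hbgood_def
  proof (intro conjI allI impI)
    obtain X where "X \<in> C" using False by blast
    then show "(w, norm w) \<in> \<Union>C" using hbgoodD(1)[OF ch1] by blast
  next
    fix x a b assume h: "(x,a) \<in> \<Union>C" "(x,b) \<in> \<Union>C"
    from two[OF h] obtain X where "X \<in> C" "(x,a) \<in> X" "(x,b) \<in> X" by blast
    then show "a = b" using hbgoodD(2)[OF ch1] by blast
  next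
    fix x y a b assume h: "(x,a) \<in> \<Union>C" "(y,b) \<in> \<Union>C"
    from two[OF h] obtain X where "X \<in> C" "(x,a) \<in> X" "(y,b) \<in> X" by blast
    then show "(x+y,a+b) \<in> \<Union>C" using hbgoodD(3)[OF ch1] by blast
  next
    fix x a c assume "(x,a) \<in> \<Union>C"
    then obtain X where "X \<in> C" "(x,a) \<in> X" by blast
    then show "(c *\<^sub>R x, c*a) \<in> \<Union>C" using hbgoodD(4)[OF ch1] by blast
  next
    fix x a assume "(x,a) \<in> \<Union>C"
    then obtain X where "X \<in> C" "(x,a) \<in> X" by blast
    then show "a \<le> norm x" using hbgoodD(5)[OF ch1] by blast
  qed
  then show ?thesis by blast
qed

lemma hb_extend:
  assumes g: "hbgood w M" and x: "x \<notin> Domain M"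
  shows "\<exists>M'. hbgood w M' \<and> M \<subseteq> M' \<and> M' \<noteq> M"
proof -
  have fn: "\<And>x a b. (x,a)\<in>M \<Longrightarrow> (x,b)\<in>M \<Longrightarrow> a = b"
   and add: "\<And>x y a b. (x,a)\<in>M \<Longrightarrow> (y,b)\<in>M \<Longrightarrow> (x+y,a+b)\<in>M"
   and scl: "\<And>x a c. (x,a)\<in>M \<Longrightarrow> (c *\<^sub>R x, c*a)\<in>M"
   and bnd: "\<And>x a. (x,a)\<in>M \<Longrightarrow> a \<le> norm x"
   and ww: "(w, norm w) \<in> M"
    using g unfolding hbgood_def by blast+
  have z: "(0,0) \<in> M" using scl[OF ww, of 0] by simp
  define S where "S = {a - norm (y - x) | y a. (y,a) \<in> M}"
  define c where "c = Sup S"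
  have key: "a - norm (y - x) \<le> norm (z + x) - b" if "(y,a)\<in>M" "(z,b)\<in>M" for y a z b
  proof -
    have "a + b \<le> norm (y + z)" using bnd[OF add[OF that]] .
    also have "\<dots> \<le> norm (y - x) + norm (z + x)"
      using norm_triangle_ineq[of "y - x" "z + x"] by simp
    finally show ?thesis by simp
  qed
  have Sne: "S \<noteq> {}" using z unfolding S_def by blast
  have c_up: "a - norm (y - x) \<le> c" if "(y,a)\<in>M" for y a
  proof -
    have "a - norm (y - x) \<in> S" using that unfolding S_def by blast
    moreover have "bdd_above S" unfolding bdd_above_def S_def
      using key[OF _ z] by (intro exI[of _ "norm (0 + x) - 0"]) blast
    ultimately show ?thesis unfolding c_def by (rule cSup_upper)
  qed
  have c_lo: "c \<le> norm (z + x) - b" if "(z,b)\<in>M" for z b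
    unfolding c_def
  proof (rule cSup_least[OF Sne])
    fix r assume "r \<in> S"
    then obtain y a where "r = a - norm (y - x)" "(y,a) \<in> M" unfolding S_def by blast
    then show "r \<le> norm (z + x) - b" using key that by blast
  qed
  define M' where "M' = {(y + t *\<^sub>R x, a + t * c) | y a t. (y,a) \<in> M}"
  have inM': "(y + t *\<^sub>R x, a + t * c) \<in> M'" if "(y,a)\<in>M" for y a t
    using that unfolding M'_def by blast
  have sub: "M \<subseteq> M'"
  proof
    fix p assume "p \<in> M" then obtain y a where "p = (y,a)" "(y,a) \<in> M" by (cases p) auto
    then show "p \<in> M'" using inM'[of y a 0] by simp
  qed
  have xin: "(x, c) \<in> M'" using inM'[OF z, of 1] by simp
  have neq: "M' \<noteq> M" using xin x by auto
  have uniq: "t = s \<and> y = y' \<and> a = a'" if "(y,a)\<in>M" "(y',a')\<in>M" "y + t *\<^sub>R x = y' + s *\<^sub>R x" for y a y' a' t s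
  proof (cases "t = s")
    case True then show ?thesis using that fn by auto
  next
    case False
    have "(y' + (-1) *\<^sub>R y, a' + (-1)*a) \<in> M" using add[OF that(2) scl[OF that(1)]] .
    then have d: "(y' - y, a' - a) \<in> M" by simp
    have "((1/(t - s)) *\<^sub>R (y' - y), (1/(t-s)) * (a' - a)) \<in> M"
      by (rule scl[OF d])
    moreover have "(1/(t - s)) *\<^sub>R (y' - y) = x"
    proof -
      have "y' - y = (t - s) *\<^sub>R x" using that(3) by (simp add: algebra_simps)
      then show ?thesis using False by simp
    qed
    ultimately show ?thesis using x by (metis Domain.DomainI)
  qed
  have good': "hbgood w M'" unfolding hbgood_def
  proof (intro conjI allI impI)
    show "(w, norm w) \<in> M'" using sub ww by blast
  next
    fix p a b assume "(p,a) \<in> M'" "(p,b) \<in> M'"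
    then obtain y a0 t y' b0 s where "(y,a0)\<in>M" "(y',b0)\<in>M" "p = y + t *\<^sub>R x" "a = a0 + t*c"
      "p = y' + s *\<^sub>R x" "b = b0 + s*c" unfolding M'_def by blast
    then show "a = b" using uniq by metis
  next
    fix p q a b assume "(p,a) \<in> M'" "(q,b) \<in> M'"
    then obtain y a0 t y' b0 s where "(y,a0)\<in>M" "(y',b0)\<in>M" "p = y + t *\<^sub>R x" "a = a0 + t*c"
      "q = y' + s *\<^sub>R x" "b = b0 + s*c" unfolding M'_def by blast
    then show "(p+q,a+b) \<in> M'" using inM'[OF add, of y a0 y' b0 "t+s"]
      by (simp add: algebra_simps scaleR_add_left)
  next
    fix p a r assume "(p,a) \<in> M'"
    then obtain y a0 t where "(y,a0)\<in>M" "p = y + t *\<^sub>R x" "a = a0 + t*c"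
      unfolding M'_def by blast
    then show "(r *\<^sub>R p, r*a) \<in> M'" using inM'[OF scl, of y a0 r "r*t"]
      by (simp add: algebra_simps)
  next
    fix p a assume "(p,a) \<in> M'"
    then obtain y a0 t where ya: "(y,a0)\<in>M" and p: "p = y + t *\<^sub>R x" and a: "a = a0 + t*c"
      unfolding M'_def by blast
    show "a \<le> norm p"
    proof (cases "t = 0")
      case True then show ?thesis using bnd[OF ya] p a by simp
    next
      case False
      show ?thesis
      proof (cases "t > 0")
        case True
        have "c \<le> norm ((1/t) *\<^sub>R y + x) - (1/t)*a0" using c_lo[OF scl[OF ya]] .
        also have "(1/t) *\<^sub>R y + x = (1/t) *\<^sub>R p" using True p by (simp add: algebra_simps)
        finally have "c \<le> (1/t) * norm p - (1/t) * a0" using True by simp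
        then have "t * c \<le> t * ((1/t) * norm p - (1/t) * a0)" using True by (simp add: mult_left_mono)
        then show ?thesis using True a by (simp add: algebra_simps)
      next
        case False2: False
        define s where "s = - t"
        have s: "s > 0" using False False2 s_def by simp
        have "(1/s)*a0 - norm ((1/s) *\<^sub>R y - x) \<le> c" using c_up[OF scl[OF ya]] .
        also have "(1/s) *\<^sub>R y - x = (1/s) *\<^sub>R p" using s p s_def by (simp add: algebra_simps)
        finally have "(1/s)*a0 - (1/s) * norm p \<le> c" using s by simp
        then have "s * ((1/s)*a0 - (1/s) * norm p) \<le> s * c" using s by (simp add: mult_left_mono)
        then show ?thesis using s a s_def by (simp add: algebra_simps)
      qed
    qed
  qed
  show ?thesis using good' sub neq by blast
qed

theorem hahn_banach_norming:
  fixes w :: "'a::real_normed_vector"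
  shows "\<exists>f. bounded_linear f \<and> (\<forall>x. \<bar>f x\<bar> \<le> norm x) \<and> f w = norm w"
proof -
  obtain M where M: "M \<in> {G. hbgood w G}" and max: "\<forall>X\<in>{G. hbgood w G}. M \<subseteq> X \<longrightarrow> X = M"
    using Zorn_Lemma2[of "{G. hbgood w G}"] hb_chain by blast
  have g: "hbgood w M" using M by simp
  have dom: "x \<in> Domain M" for x
    using hb_extend[OF g, of x] max by blast
  have fn: "\<And>x a b. (x,a)\<in>M \<Longrightarrow> (x,b)\<in>M \<Longrightarrow> a = b"
   and add: "\<And>x y a b. (x,a)\<in>M \<Longrightarrow> (y,b)\<in>M \<Longrightarrow> (x+y,a+b)\<in>M"
   and scl: "\<And>x a c. (x,a)\<in>M \<Longrightarrow> (c *\<^sub>R x, c*a)\<in>M"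
   and bnd: "\<And>x a. (x,a)\<in>M \<Longrightarrow> a \<le> norm x"
   and ww: "(w, norm w) \<in> M"
    using g unfolding hbgood_def by blast+
  define f where "f x = (THE a. (x,a) \<in> M)" for x
  have fM: "(x, f x) \<in> M" for x
  proof -
    obtain a where "(x,a) \<in> M" using dom[of x] by auto
    moreover have "(THE a. (x,a) \<in> M) = a" by (rule the_equality) (use fn \<open>(x,a) \<in> M\<close> in blast)+
    ultimately show ?thesis unfolding f_def by simp
  qed
  have fval: "f x = a" if "(x,a) \<in> M" for x a using fn[OF fM that] .
  have lin: "linear f"
    by (rule linearI) (use fval add scl fM in auto)
  have ab: "\<bar>f x\<bar> \<le> norm x" for x
  proof -
    have "f x \<le> norm x" using bnd[OF fM] .
    moreover have "- f x \<le> norm x" using bnd[OF scl[OF fM[of x], of "-1"]] by simp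
    ultimately show ?thesis by simp
  qed
  have "bounded_linear f"
    using lin ab by (auto simp: bounded_linear_def bounded_linear_axioms_def linear_conv_bounded_linear intro!: exI[of _ 1])
  then show ?thesis using ab fval[OF ww] by blast
qed


lemma weakly_nullD: fixes f :: "'a::real_normed_vector \<Rightarrow> real" shows "weakly_null v \<Longrightarrow> bounded_linear f \<Longrightarrow> (\<lambda>k. f (v k)) \<longlonglongrightarrow> 0"
  unfolding weakly_null_def by blast

lemma weakly_null_bounded:
  fixes v :: "nat \<Rightarrow> 'a::real_normed_vector"
  assumes wn: "weakly_null v"
  shows "\<exists>M. \<forall>n. norm (v n) \<le> M"
proof (rule ccontr)
  assume nb: "\<not> (\<exists>M. \<forall>n. norm (v n) \<le> M)"
  have big: "\<exists>n\<ge>N. norm (v n) > B" for N B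
  proof (rule ccontr)
    assume "\<not> (\<exists>n\<ge>N. norm (v n) > B)"
    then have "norm (v n) \<le> max B (Max ((\<lambda>k. norm (v k)) ` {..<N}))" for n
    proof (cases "n < N")
      case True
      then have "norm (v n) \<le> Max ((\<lambda>k. norm (v k)) ` {..<N})" by (intro Max_ge) auto
      then show ?thesis by linarith
    next
      case False then show ?thesis using \<open>\<not> (\<exists>n\<ge>N. norm (v n) > B)\<close> by (auto simp: not_less)
    qed
    then show False using nb by blast
  qed
  define a :: "nat \<Rightarrow> real" where "a i = (1/3)^i" for i
  have a_pos: "a i > 0" for i unfolding a_def by simp
  define P where "P j g n \<longleftrightarrow> n \<ge> j \<and> norm (v n) \<ge> 4 * 3^j \<and> \<bar>g (v n)\<bar> \<le> 1"
    for j and g :: "'a \<Rightarrow> real" and n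
  define nsel where "nsel j g = (SOME n. P j g n)" for j g
  define fsel where "fsel j g = (SOME f. bounded_linear f \<and> (\<forall>x. \<bar>f x\<bar> \<le> norm x) \<and> f (v (nsel j g)) = norm (v (nsel j g)))" for j g
  have fsel: "bounded_linear (fsel j g) \<and> (\<forall>x. \<bar>fsel j g x\<bar> \<le> norm x) \<and> fsel j g (v (nsel j g)) = norm (v (nsel j g))" for j g
    unfolding fsel_def by (rule someI_ex[OF hahn_banach_norming])
  have nsel: "P j g (nsel j g)" if "bounded_linear g" for j g
  proof -
    have "(\<lambda>k. g (v k)) \<longlonglongrightarrow> 0" using weakly_nullD[OF wn that] .
    then obtain N where N: "\<And>n. n \<ge> N \<Longrightarrow> \<bar>g (v n)\<bar> < 1"
      using LIMSEQ_D[of _ 0 1] by fastforce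
    obtain n where n: "n \<ge> max N j" "norm (v n) > 4 * 3^j" using big by blast
    have "P j g n" unfolding P_def using n N[of n] by auto
    then show ?thesis unfolding nsel_def by (rule someI)
  qed
  define g where "g = rec_nat (\<lambda>x. 0) (\<lambda>j gj. (\<lambda>x. gj x + a j * fsel j gj x))"
  have g0: "g 0 = (\<lambda>x. 0)" and gS: "g (Suc j) = (\<lambda>x. g j x + a j * fsel j (g j) x)" for j
    unfolding g_def by simp_all
  define ff where "ff i = fsel i (g i)" for i
  define nn where "nn i = nsel i (g i)" for i
  have g_bl: "bounded_linear (g j)" for j
  proof (induction j)
    case 0 then show ?case by (simp add: g0 bounded_linear_zero)
  next
    case (Suc j)
    have "bounded_linear (\<lambda>x. a j * fsel j (g j) x)"
      using fsel[of j "g j"] by (auto intro: bounded_linear_const_mult)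
    then show ?case unfolding gS using Suc bounded_linear_add by blast
  qed
  have g_sum: "g j x = (\<Sum>i<j. a i * ff i x)" for j x
    by (induction j) (simp_all add: g0 gS ff_def)
  have ffb: "\<bar>ff i x\<bar> \<le> norm x" for i x using fsel unfolding ff_def by blast
  have nnP: "P j (g j) (nn j)" for j unfolding nn_def using nsel[OF g_bl] .
  have ffn: "ff j (v (nn j)) = norm (v (nn j))" for j using fsel unfolding ff_def nn_def by blast
  have geo: "summable (\<lambda>i. a i)" unfolding a_def by simp
  have sumab: "summable (\<lambda>i. a i * ff i x)" for x
  proof (rule summable_comparison_test[OF _ summable_mult2[OF geo, of "norm x"]])
    have "norm (a n * ff n x) \<le> a n * norm x" for n
      using ffb[of n x] a_pos[of n] by (simp add: abs_mult mult_left_mono)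
    then show "\<exists>N. \<forall>n\<ge>N. norm (a n * ff n x) \<le> a n * norm x" by blast
  qed
  define f where "f x = (\<Sum>i. a i * ff i x)" for x
  have ffl: "linear (ff i)" for i using fsel unfolding ff_def by (blast intro: bounded_linear.linear)
  have f_lin: "linear f"
  proof (rule linearI)
    fix x y show "f (x + y) = f x + f y" unfolding f_def
      using suminf_add[OF sumab[of x] sumab[of y]] linear_add[OF ffl]
      by (simp add: distrib_left)
  next
    fix c x show "f (c *\<^sub>R x) = c *\<^sub>R f x" unfolding f_def
      using suminf_mult[OF sumab[of x], of c] linear_scale[OF ffl]
      by (simp add: algebra_simps)
  qed
  have suma: "(\<Sum>i. a i) = 3/2" unfolding a_def using suminf_geometric[of "1/3::real"] by simp
  have f_bd: "\<bar>f x\<bar> \<le> norm x * (3/2)" for x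
  proof -
    have "\<bar>f x\<bar> \<le> (\<Sum>i. a i * norm x)" unfolding f_def
      using norm_suminf_le[of "\<lambda>i. a i * ff i x" "\<lambda>i. a i * norm x", OF _ summable_mult2[OF geo, of "norm x"]]
        ffb a_pos by (simp add: abs_mult mult_left_mono less_imp_le)
    also have "\<dots> = norm x * (3/2)" using suminf_mult2[OF geo, of "norm x"] suma by (simp add: mult.commute)
    finally show ?thesis .
  qed
  have f_bl: "bounded_linear f"
    using f_lin f_bd by (auto simp: bounded_linear_def bounded_linear_axioms_def linear_conv_bounded_linear intro!: exI[of _ "3/2"])
  have fbig: "f (v (nn j)) \<ge> 1" for j
  proof -
    define y where "y = v (nn j)"
    have Py: "norm y \<ge> 4 * 3^j" "\<bar>g j y\<bar> \<le> 1" using nnP[of j] unfolding P_def y_def by auto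
    have split: "f y = (\<Sum>i<Suc j. a i * ff i y) + (\<Sum>i. a (i + Suc j) * ff (i + Suc j) y)"
      unfolding f_def using suminf_split_initial_segment[OF sumab[of y], of "Suc j"] by simp
    have head: "(\<Sum>i<Suc j. a i * ff i y) = g j y + a j * norm y"
      using g_sum[of j y] ffn[of j] unfolding y_def by simp
    have tailsum: "summable (\<lambda>i. a (i + Suc j))" using summable_ignore_initial_segment[OF geo] .
    have tail: "\<bar>\<Sum>i. a (i + Suc j) * ff (i + Suc j) y\<bar> \<le> (\<Sum>i. a (i + Suc j)) * norm y"
    proof -
      have "\<bar>\<Sum>i. a (i + Suc j) * ff (i + Suc j) y\<bar> \<le> (\<Sum>i. a (i + Suc j) * norm y)"
        using norm_suminf_le[of "\<lambda>i. a (i + Suc j) * ff (i + Suc j) y" "\<lambda>i. a (i + Suc j) * norm y", OF _ summable_mult2[OF tailsum, of "norm y"]]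
        ffb a_pos by (simp add: abs_mult mult_left_mono less_imp_le)
      also have "\<dots> = (\<Sum>i. a (i + Suc j)) * norm y" using suminf_mult2[OF tailsum] by simp
      finally show ?thesis .
    qed
    have "(\<Sum>i. a (i + Suc j)) = (\<Sum>i. (1/3)^(Suc j) * (1/3)^i)"
      unfolding a_def by (simp add: power_add mult.commute)
    also have "\<dots> = (1/3)^(Suc j) * (3/2)"
      using suminf_mult[of "\<lambda>i. (1/3::real)^i" "(1/3)^(Suc j)"] suminf_geometric[of "1/3::real"] by simp
    finally have ts: "(\<Sum>i. a (i + Suc j)) = a j / 2" unfolding a_def by simp
    have e: "a j * (4 * 3^j) = 4" unfolding a_def
      by (simp add: power_mult_distrib[symmetric] mult.assoc[symmetric] mult.commute[of _ 4])
    have "a j * (4 * 3^j) \<le> a j * norm y" using Py(1) a_pos[of j] by (simp add: mult_left_mono)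
    then have big4: "a j * norm y \<ge> 4" using e by simp
    have t2: "\<bar>\<Sum>i. a (i + Suc j) * ff (i + Suc j) y\<bar> \<le> a j * norm y / 2" using tail unfolding ts by (simp add: mult.commute)
    have "f y \<ge> 1" unfolding split head using t2 big4 Py(2) by linarith
    then show ?thesis unfolding y_def .
  qed
  have "(\<lambda>k. f (v k)) \<longlonglongrightarrow> 0" using weakly_nullD[OF wn f_bl] .
  then obtain N where N: "\<And>n. n \<ge> N \<Longrightarrow> \<bar>f (v n)\<bar> < 1"
    using LIMSEQ_D[of _ 0 1] by fastforce
  have "nn N \<ge> N" using nnP[of N] unfolding P_def by simp
  then show False using N[of "nn N"] fbig[of N] by simp
qed


definition fs :: "(nat \<Rightarrow> real) \<Rightarrow> bool" where
  "fs c \<longleftrightarrow> (\<exists>N. \<forall>n\<ge>N. c n = 0)"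

definition pair :: "(nat \<Rightarrow> real) \<Rightarrow> (nat \<Rightarrow> real) \<Rightarrow> real" where
  "pair c \<psi> = (\<Sum>n. c n * \<psi> n)"

definition Conv :: "nat \<Rightarrow> (nat \<Rightarrow> real) set" where
  "Conv k = {c. (\<forall>n. 0 \<le> c n) \<and> (\<forall>n<k. c n = 0) \<and> fs c \<and> pair c (\<lambda>_. 1) = 1}"

lemma pair_eq_sum: "(\<And>n. n \<ge> N \<Longrightarrow> c n = 0) \<Longrightarrow> pair c \<psi> = (\<Sum>n<N. c n * \<psi> n)"
  unfolding pair_def by (rule suminf_finite) auto

lemma fs_summable: "fs c \<Longrightarrow> summable (\<lambda>n. c n * \<psi> n)"
proof -
  assume "fs c" then obtain N where "\<forall>n\<ge>N. c n = 0" unfolding fs_def by blast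
  then show ?thesis by (intro summable_finite[of "{..<N}"]) auto
qed

lemma fs_add: "fs c \<Longrightarrow> fs d \<Longrightarrow> fs (\<lambda>n. c n + d n)"
proof -
  assume "fs c" "fs d"
  then obtain N1 N2 where "\<forall>n\<ge>N1. c n = 0" "\<forall>n\<ge>N2. d n = 0" unfolding fs_def by blast
  then show ?thesis unfolding fs_def by (intro exI[of _ "max N1 N2"]) auto
qed

lemma fs_scale: "fs c \<Longrightarrow> fs (\<lambda>n. r * c n)"
  unfolding fs_def by auto

lemma fs_zero: "fs (\<lambda>n. 0)" unfolding fs_def by auto

lemma fs_sum: "finite I \<Longrightarrow> (\<And>i. i \<in> I \<Longrightarrow> fs (c i)) \<Longrightarrow> fs (\<lambda>n. \<Sum>i\<in>I. c i n)"
  by (induction I rule: finite_induct) (auto intro: fs_add fs_zero)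

lemma pair_add: "fs c \<Longrightarrow> fs d \<Longrightarrow> pair (\<lambda>n. c n + d n) \<psi> = pair c \<psi> + pair d \<psi>"
  unfolding pair_def using suminf_add[OF fs_summable fs_summable] by (simp add: distrib_right)

lemma pair_scale: "fs c \<Longrightarrow> pair (\<lambda>n. r * c n) \<psi> = r * pair c \<psi>"
  unfolding pair_def using suminf_mult[OF fs_summable[where c=c and \<psi>=\<psi>], of r] by (simp add: mult.assoc)

lemma pair_zero: "pair (\<lambda>n. 0) \<psi> = 0" unfolding pair_def by simp

lemma pair_sum: "finite I \<Longrightarrow> (\<And>i. i \<in> I \<Longrightarrow> fs (c i)) \<Longrightarrow> pair (\<lambda>n. \<Sum>i\<in>I. c i n) \<psi> = (\<Sum>i\<in>I. pair (c i) \<psi>)"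
proof (induction I rule: finite_induct)
  case empty then show ?case by (simp add: pair_zero)
next
  case (insert x F)
  have "pair (\<lambda>n. \<Sum>i\<in>insert x F. c i n) \<psi> = pair (\<lambda>n. c x n + (\<Sum>i\<in>F. c i n)) \<psi>"
    using insert by simp
  also have "\<dots> = pair (c x) \<psi> + pair (\<lambda>n. \<Sum>i\<in>F. c i n) \<psi>"
    by (rule pair_add) (use insert fs_sum in auto)
  finally show ?case using insert by simp
qed

lemma pair_le:
  assumes "fs c" "\<And>n. 0 \<le> c n" "\<And>n. c n \<noteq> 0 \<Longrightarrow> \<psi> n \<le> \<theta>"
  shows "pair c \<psi> \<le> \<theta> * pair c (\<lambda>_. 1)"
proof -
  have "pair c \<psi> \<le> pair c (\<lambda>_. \<theta>)" unfolding pair_def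
  proof (rule suminf_le)
    fix n show "c n * \<psi> n \<le> c n * \<theta>"
    proof (cases "c n = 0")
      case False then show ?thesis using assms(2,3) by (simp add: mult_left_mono)
    qed simp
  qed (rule fs_summable[OF assms(1)])+
  also have "pair c (\<lambda>_. \<theta>) = \<theta> * pair c (\<lambda>_. 1)" unfolding pair_def
    using suminf_mult[OF fs_summable[OF assms(1), of "\<lambda>_. 1"], of \<theta>] by (simp add: mult.commute)
  finally show ?thesis .
qed

lemma pair_ge:
  assumes "fs c" "\<And>n. 0 \<le> c n" "\<And>n. c n \<noteq> 0 \<Longrightarrow> \<psi> n \<ge> \<theta>"
  shows "pair c \<psi> \<ge> \<theta> * pair c (\<lambda>_. 1)"
proof -
  have "pair c (\<lambda>n. - \<psi> n) \<le> (-\<theta>) * pair c (\<lambda>_. 1)"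
    by (rule pair_le) (use assms in auto)
  moreover have "pair c (\<lambda>n. - \<psi> n) = - pair c \<psi>" unfolding pair_def
    using suminf_minus[OF fs_summable[OF assms(1), of \<psi>]] by simp
  ultimately show ?thesis by simp
qed

lemma Conv_le: "c \<in> Conv k \<Longrightarrow> (\<And>n. n \<ge> k \<Longrightarrow> \<psi> n \<le> \<theta>) \<Longrightarrow> pair c \<psi> \<le> \<theta>"
proof -
  assume c: "c \<in> Conv k" and b: "\<And>n. n \<ge> k \<Longrightarrow> \<psi> n \<le> \<theta>"
  have "pair c \<psi> \<le> \<theta> * pair c (\<lambda>_. 1)"
  proof (rule pair_le)
    fix n assume "c n \<noteq> 0" then have "n \<ge> k" using c unfolding Conv_def by (auto simp: not_le[symmetric])
    then show "\<psi> n \<le> \<theta>" using b by blast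
  qed (use c in \<open>auto simp: Conv_def\<close>)
  then show ?thesis using c unfolding Conv_def by simp
qed

lemma Conv_ge: "c \<in> Conv k \<Longrightarrow> (\<And>n. n \<ge> k \<Longrightarrow> \<psi> n \<ge> \<theta>) \<Longrightarrow> pair c \<psi> \<ge> \<theta>"
proof -
  assume c: "c \<in> Conv k" and b: "\<And>n. n \<ge> k \<Longrightarrow> \<psi> n \<ge> \<theta>"
  have "pair c \<psi> \<ge> \<theta> * pair c (\<lambda>_. 1)"
  proof (rule pair_ge)
    fix n assume "c n \<noteq> 0" then have "n \<ge> k" using c unfolding Conv_def by (auto simp: not_le[symmetric])
    then show "\<psi> n \<ge> \<theta>" using b by blast
  qed (use c in \<open>auto simp: Conv_def\<close>)
  then show ?thesis using c unfolding Conv_def by simp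
qed

lemma Conv_mono: "c \<in> Conv k \<Longrightarrow> j \<le> k \<Longrightarrow> c \<in> Conv j"
  unfolding Conv_def by auto

lemma Conv_comb:
  assumes "finite I" "\<And>i. i \<in> I \<Longrightarrow> c i \<in> Conv k" "\<And>i. i \<in> I \<Longrightarrow> 0 \<le> t i" "(\<Sum>i\<in>I. t i) = 1"
  shows "(\<lambda>n. \<Sum>i\<in>I. t i * c i n) \<in> Conv k"
proof -
  have fsc: "fs (\<lambda>n. t i * c i n)" if "i \<in> I" for i
    using assms(2)[OF that] fs_scale unfolding Conv_def by auto
  have "pair (\<lambda>n. \<Sum>i\<in>I. t i * c i n) (\<lambda>_. 1) = (\<Sum>i\<in>I. pair (\<lambda>n. t i * c i n) (\<lambda>_. 1))"
    by (rule pair_sum[OF assms(1) fsc])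
  also have "\<dots> = (\<Sum>i\<in>I. t i)"
    by (rule sum.cong) (use assms(2) pair_scale in \<open>auto simp: Conv_def\<close>)
  finally have p1: "pair (\<lambda>n. \<Sum>i\<in>I. t i * c i n) (\<lambda>_. 1) = 1" using assms(4) by simp
  have nn: "0 \<le> (\<Sum>i\<in>I. t i * c i n)" for n
    using assms(2,3) unfolding Conv_def by (intro sum_nonneg) simp
  have z: "(\<Sum>i\<in>I. t i * c i n) = 0" if "n < k" for n
    using assms(2) that unfolding Conv_def by (intro sum.neutral) simp
  have fsI: "fs (\<lambda>n. \<Sum>i\<in>I. t i * c i n)" by (rule fs_sum[OF assms(1)]) (rule fsc)
  show ?thesis unfolding Conv_def using p1 nn z fsI by blast
qed

lemma Conv_delta: "(\<lambda>n. if n = k then 1 else 0) \<in> Conv k"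
proof -
  have "pair (\<lambda>n. if n = k then 1 else 0) (\<lambda>_. 1) = 1"
    by (subst pair_eq_sum[of "Suc k"]) auto
  then show ?thesis unfolding Conv_def fs_def by (auto intro!: exI[of _ "Suc k"])
qed

definition Ser :: "(nat \<Rightarrow> real) \<Rightarrow> real" where
  "Ser p = (\<Sum>i. (1/2)^(Suc i) * p i)"

lemma Ser_term: "\<bar>p i\<bar> \<le> M \<Longrightarrow> \<bar>(1/2::real)^(Suc i) * p i\<bar> \<le> M * (1/2)^(Suc i)"
proof -
  assume a: "\<bar>p i\<bar> \<le> M"
  have "\<bar>(1/2::real)^(Suc i) * p i\<bar> = (1/2)^(Suc i) * \<bar>p i\<bar>" by (simp add: abs_mult)
  also have "\<dots> \<le> (1/2)^(Suc i) * M" by (rule mult_left_mono) (use a in auto)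
  finally show ?thesis by (simp only: mult.commute)
qed

lemma Ser_summable: "(\<And>i. \<bar>p i\<bar> \<le> M) \<Longrightarrow> summable (\<lambda>i. (1/2::real)^(Suc i) * p i)"
proof (rule summable_comparison_test[of _ "\<lambda>i. M * (1/2)^(Suc i)"])
  assume "\<And>i. \<bar>p i\<bar> \<le> M"
  then show "\<exists>N. \<forall>n\<ge>N. norm ((1/2::real)^(Suc n) * p n) \<le> M * (1/2)^(Suc n)"
    using Ser_term unfolding real_norm_def by blast
  show "summable (\<lambda>i. M * (1/2::real)^(Suc i))"
    by (intro summable_mult) simp
qed

lemma half_sum: "(\<Sum>i. (1/2::real)^(Suc i)) = 1"
  using suminf_mult[of "\<lambda>i. (1/2::real)^i" "1/2"] suminf_geometric[of "1/2::real"] by simp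

lemma Ser_bound: assumes "\<And>i. \<bar>p i\<bar> \<le> M" shows "\<bar>Ser p\<bar> \<le> M"
proof -
  have s: "summable (\<lambda>i. M * (1/2::real)^(Suc i))" by (intro summable_mult) simp
  have "\<bar>Ser p\<bar> \<le> (\<Sum>i. M * (1/2::real)^(Suc i))" unfolding Ser_def
    by (rule norm_suminf_le[of "\<lambda>i. (1/2::real)^(Suc i) * p i" "\<lambda>i. M * (1/2)^(Suc i)", OF _ s, unfolded real_norm_def])
      (rule Ser_term, rule assms)
  also have "\<dots> = M * (\<Sum>i. (1/2::real)^(Suc i))" by (rule suminf_mult) simp
  finally show ?thesis unfolding half_sum by simp
qed

lemma Ser_split:
  assumes "\<And>i. \<bar>p i\<bar> \<le> M"
  shows "Ser p = (\<Sum>i<N. (1/2)^(Suc i) * p i) + (1/2)^N * Ser (\<lambda>i. p (i + N))"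
proof -
  have "Ser p = (\<Sum>i. (1/2)^(Suc (i + N)) * p (i + N)) + (\<Sum>i<N. (1/2)^(Suc i) * p i)"
    unfolding Ser_def by (rule suminf_split_initial_segment[OF Ser_summable[OF assms]])
  also have "(\<Sum>i. (1/2::real)^(Suc (i + N)) * p (i + N)) = (1/2)^N * Ser (\<lambda>i. p (i + N))"
    unfolding Ser_def
  proof -
    have e: "(1/2::real)^(Suc (i + N)) * p (i + N) = (1/2)^N * ((1/2)^(Suc i) * p (i + N))" for i
      by (simp add: power_add)
    show "(\<Sum>i. (1/2::real)^(Suc (i + N)) * p (i + N)) = (1/2)^N * (\<Sum>i. (1/2)^(Suc i) * p (i + N))"
      unfolding e by (rule suminf_mult) (rule Ser_summable[of _ M], use assms in blast)
  qed
  finally show ?thesis by linarith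
qed


lemma Ser_le:
  assumes "\<And>i. \<bar>p i\<bar> \<le> M" "\<And>i. p i \<le> \<theta>"
  shows "Ser p \<le> \<theta>"
proof -
  have "Ser p \<le> (\<Sum>i. (1/2::real)^(Suc i) * \<theta>)" unfolding Ser_def
  proof (rule suminf_le)
    fix i show "(1/2::real)^(Suc i) * p i \<le> (1/2)^(Suc i) * \<theta>"
      by (rule mult_left_mono) (use assms(2) in auto)
  qed (rule Ser_summable[OF assms(1)], rule Ser_summable[of _ "\<bar>\<theta>\<bar>"], simp)
  also have "\<dots> = (\<Sum>i. (1/2::real)^(Suc i)) * \<theta>" using suminf_mult2[of "\<lambda>i. (1/2::real)^(Suc i)" \<theta>] by simp
  finally show ?thesis unfolding half_sum by simp
qed

lemma geo_w: "(\<Sum>i<k. (1/2::real)^(Suc i)) + (1/2)^k = 1"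
  by (induction k) (simp_all add: field_simps)

lemma geo_w2: "k \<le> N \<Longrightarrow> (\<Sum>i\<in>{k..<N}. (1/2::real)^(Suc i)) + (1/2)^N = (1/2)^k"
proof -
  assume "k \<le> N"
  then have "(\<Sum>i<N. (1/2::real)^(Suc i)) = (\<Sum>i<k. (1/2::real)^(Suc i)) + (\<Sum>i\<in>{k..<N}. (1/2::real)^(Suc i))"
    by (metis atLeast0LessThan sum.atLeastLessThan_concat zero_le)
  then show ?thesis using geo_w[of k] geo_w[of N] by linarith
qed

lemma simons:
  fixes T :: "(nat \<Rightarrow> real) set" and M \<epsilon> :: real
  assumes Tne: "T \<noteq> {}"
    and bnd: "\<And>\<phi> n. \<phi> \<in> T \<Longrightarrow> \<bar>\<phi> n\<bar> \<le> M"
    and nul: "\<And>\<phi>. \<phi> \<in> T \<Longrightarrow> \<phi> \<longlonglongrightarrow> 0"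
    and att: "\<And>cs. (\<And>i. cs i \<in> Conv i) \<Longrightarrow> \<exists>\<phi>\<in>T. \<forall>\<psi>\<in>T. Ser (\<lambda>i. pair (cs i) \<psi>) \<le> Ser (\<lambda>i. pair (cs i) \<phi>)"
    and eps: "\<epsilon> > 0"
  shows "\<exists>c\<in>Conv 0. \<forall>\<phi>\<in>T. pair c \<phi> \<le> \<epsilon>"
proof -
  define \<Psi> where "\<Psi> c = (SUP \<psi>\<in>T. pair c \<psi>)" for c
  have pbnd: "\<bar>pair c \<psi>\<bar> \<le> M" if "c \<in> Conv k" "\<psi> \<in> T" for c k \<psi>
  proof -
    have b: "\<bar>\<psi> n\<bar> \<le> M" for n using bnd that(2) by blast
    have "pair c \<psi> \<le> M" 
    proof (rule Conv_le[OF that(1)])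
      fix n show "\<psi> n \<le> M" using b[of n] by linarith
    qed
    moreover have "pair c \<psi> \<ge> -M"
    proof (rule Conv_ge[OF that(1)])
      fix n show "-M \<le> \<psi> n" using b[of n] by linarith
    qed
    ultimately show ?thesis by (simp add: abs_le_iff)
  qed
  have \<Psi>_upper: "pair c \<psi> \<le> \<Psi> c" if "c \<in> Conv k" "\<psi> \<in> T" for c k \<psi>
    unfolding \<Psi>_def
  proof (rule cSUP_upper[OF that(2)])
    show "bdd_above ((\<lambda>\<psi>. pair c \<psi>) ` T)" unfolding bdd_above_def
      using pbnd[OF that(1)] by (intro exI[of _ M]) (auto simp: abs_le_iff)
  qed
  have \<Psi>_least: "\<Psi> c \<le> X" if "\<And>\<psi>. \<psi>\<in>T \<Longrightarrow> pair c \<psi> \<le> X" for c X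
    unfolding \<Psi>_def by (rule cSUP_least[OF Tne]) (rule that)
  obtain \<psi>0 where \<psi>0: "\<psi>0 \<in> T" using Tne by blast
  have \<Psi>_ge: "\<Psi> c \<ge> -M" if "c \<in> Conv k" for c k
    using \<Psi>_upper[OF that \<psi>0] pbnd[OF that \<psi>0] by (auto simp: abs_le_iff)
  define \<delta> where "\<delta> = \<epsilon>/3"
  have \<delta>: "\<delta> > 0" using eps \<delta>_def by simp
  define \<eta> where "\<eta> k = \<delta> * (1/2)^k * (1/2)^k" for k :: nat
  have \<eta>: "\<eta> k > 0" for k using \<delta> unfolding \<eta>_def by simp
  define w where "w i = (1/2::real)^(Suc i)" for i :: nat
  define F where "F a k d = (\<lambda>n. a n + (1/2::real)^k * d n)" for a k and d :: "nat \<Rightarrow> real"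
  define ch where "ch k a = (SOME c. c \<in> Conv k \<and> (\<forall>d\<in>Conv k. \<Psi> (F a k c) \<le> \<Psi> (F a k d) + \<eta> k))" for k a
  define acc where "acc = rec_nat (\<lambda>n. 0) (\<lambda>k a. (\<lambda>n. a n + w k * ch k a n))"
  define cs where "cs k = ch k (acc k)" for k
  have acc0: "acc 0 = (\<lambda>n. 0)" unfolding acc_def by simp
  have accS: "acc (Suc k) = (\<lambda>n. acc k n + w k * cs k n)" for k unfolding acc_def cs_def by simp
  have acc_sum: "acc k n = (\<Sum>i<k. w i * cs i n)" for k n
    by (induction k) (simp_all add: acc0 accS)
  have ex: "\<exists>c. c \<in> Conv k \<and> (\<forall>d\<in>Conv k. \<Psi> (F a k c) \<le> \<Psi> (F a k d) + \<eta> k)"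
    if Fc: "\<And>d. d \<in> Conv k \<Longrightarrow> F a k d \<in> Conv 0" for a k
  proof -
    let ?S = "(\<lambda>d. \<Psi> (F a k d)) ` Conv k"
    have ne: "?S \<noteq> {}" using Conv_delta by blast
    have bb: "bdd_below ?S" unfolding bdd_below_def using \<Psi>_ge Fc by blast
    have "Inf ?S < Inf ?S + \<eta> k" using \<eta> by simp
    then obtain s where "s \<in> ?S" "s < Inf ?S + \<eta> k" using cInf_lessD[OF ne] by blast
    then obtain c where c: "c \<in> Conv k" "\<Psi> (F a k c) < Inf ?S + \<eta> k" by blast
    have "Inf ?S \<le> \<Psi> (F a k d)" if "d \<in> Conv k" for d
      by (rule cInf_lower[OF _ bb]) (use that in blast)
    then show ?thesis using c by (intro exI[of _ c]) force
  qed
  have Fconv: "F (acc k) k d \<in> Conv 0" if dk: "d \<in> Conv k" and csi: "\<And>i. i < k \<Longrightarrow> cs i \<in> Conv i" for k d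
  proof -
    define t where "t i = (if i < k then w i else (1/2)^k)" for i
    define e where "e i = (if i < k then cs i else d)" for i
    have "F (acc k) k d = (\<lambda>n. \<Sum>i\<in>{..k}. t i * e i n)"
      unfolding F_def acc_sum by (auto simp: t_def e_def lessThan_Suc_atMost[symmetric] intro!: sum.cong)
    also have "\<dots> \<in> Conv 0"
    proof (rule Conv_comb)
      show "e i \<in> Conv 0" if "i \<in> {..k}" for i
      proof (cases "i < k")
        case True then show ?thesis unfolding e_def using Conv_mono[OF csi[OF True]] by simp
      next
        case False then show ?thesis unfolding e_def using Conv_mono[OF \<open>d \<in> Conv k\<close>] by simp
      qed
      show "0 \<le> t i" for i unfolding t_def w_def by simp
      show "(\<Sum>i\<in>{..k}. t i) = 1"
        using geo_w[of k] unfolding t_def w_def lessThan_Suc_atMost[symmetric] by simp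
    qed simp
    finally show ?thesis .
  qed
  have cs_conv: "cs k \<in> Conv k \<and> (\<forall>d\<in>Conv k. \<Psi> (F (acc k) k (cs k)) \<le> \<Psi> (F (acc k) k d) + \<eta> k)" for k
  proof (induction k rule: less_induct)
    case (less k)
    have "F (acc k) k d \<in> Conv 0" if "d \<in> Conv k" for d
      by (rule Fconv[OF that]) (use less in blast)
    then show ?case unfolding cs_def ch_def by (rule someI_ex[OF ex])
  qed
  have csC: "cs k \<in> Conv k" for k using cs_conv by blast
  have csopt: "\<Psi> (F (acc k) k (cs k)) \<le> \<Psi> (F (acc k) k d) + \<eta> k" if "d \<in> Conv k" for k d
    using cs_conv that by blast
  have GC: "F (acc k) k (cs k) \<in> Conv 0" for k by (rule Fconv[OF csC csC])
  have fsC: "fs c" if "c \<in> Conv k" for c k using that unfolding Conv_def by blast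
  have pairG: "pair (F (acc N) N (cs N)) \<psi> = (\<Sum>i<N. w i * pair (cs i) \<psi>) + (1/2)^N * pair (cs N) \<psi>" for N \<psi>
  proof -
    have fs1: "fs (\<lambda>n. \<Sum>i<N. w i * cs i n)" by (rule fs_sum) (auto intro: fs_scale fsC[OF csC])
    have "pair (F (acc N) N (cs N)) \<psi> = pair (\<lambda>n. \<Sum>i<N. w i * cs i n) \<psi> + pair (\<lambda>n. (1/2)^N * cs N n) \<psi>"
      unfolding F_def acc_sum by (rule pair_add[OF fs1 fs_scale[OF fsC[OF csC]]])
    also have "pair (\<lambda>n. \<Sum>i<N. w i * cs i n) \<psi> = (\<Sum>i<N. pair (\<lambda>n. w i * cs i n) \<psi>)"
      by (rule pair_sum) (auto intro: fs_scale fsC[OF csC])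
    also have "\<dots> = (\<Sum>i<N. w i * pair (cs i) \<psi>)"
      by (rule sum.cong) (auto intro: pair_scale fsC[OF csC])
    also have "pair (\<lambda>n. (1/2)^N * cs N n) \<psi> = (1/2)^N * pair (cs N) \<psi>"
      by (rule pair_scale[OF fsC[OF csC]])
    finally show ?thesis .
  qed
  obtain \<phi> where \<phi>T: "\<phi> \<in> T" and \<phi>max: "\<And>\<psi>. \<psi> \<in> T \<Longrightarrow> Ser (\<lambda>i. pair (cs i) \<psi>) \<le> Ser (\<lambda>i. pair (cs i) \<phi>)"
    using att[OF csC] by blast
  define u where "u i = pair (cs i) \<phi>" for i
  have ub: "\<bar>u i\<bar> \<le> M" for i unfolding u_def by (rule pbnd[OF csC \<phi>T])
  define E where "E = Ser u"
  define Tk where "Tk k = Ser (\<lambda>j. u (j + k))" for k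
  have Ea: "E = (\<Sum>i<k. w i * u i) + (1/2)^k * Tk k" for k
    unfolding E_def Tk_def w_def by (rule Ser_split[OF ub])
  have Tb: "Tk k = u k / 2 + Tk (Suc k) / 2" for k
  proof -
    have "Tk k = (\<Sum>i<1. (1/2)^(Suc i) * u (i + k)) + (1/2)^1 * Ser (\<lambda>i. u (i + 1 + k))"
      unfolding Tk_def by (rule Ser_split[of _ M]) (rule ub)
    then show ?thesis unfolding Tk_def by (simp add: add.commute add.left_commute)
  qed
  have PsiG: "\<Psi> (F (acc N) N (cs N)) \<le> E + 2 * M * (1/2)^N" for N
  proof (rule \<Psi>_least)
    fix \<psi> assume \<psi>: "\<psi> \<in> T"
    define p where "p i = pair (cs i) \<psi>" for i
    have pb: "\<bar>p i\<bar> \<le> M" for i unfolding p_def by (rule pbnd[OF csC \<psi>])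
    have "Ser p = (\<Sum>i<N. w i * p i) + (1/2)^N * Ser (\<lambda>i. p (i + N))"
      unfolding w_def by (rule Ser_split[OF pb])
    moreover have sb: "\<bar>Ser (\<lambda>i. p (i + N))\<bar> \<le> M" by (rule Ser_bound) (rule pb)
    moreover have "Ser p \<le> E" unfolding p_def E_def u_def by (rule \<phi>max[OF \<psi>])
    moreover have "pair (F (acc N) N (cs N)) \<psi> = (\<Sum>i<N. w i * p i) + (1/2)^N * p N"
      unfolding pairG p_def ..
    moreover have "(1/2::real)^N * Ser (\<lambda>i. p (i + N)) \<ge> - ((1/2)^N * M)"
    proof -
      have "-M \<le> Ser (\<lambda>i. p (i + N))" using sb by linarith
      from mult_left_mono[OF this, of "(1/2::real)^N"] show ?thesis by simp
    qed
    moreover have "(1/2::real)^N * p N \<le> (1/2)^N * M"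
      using pb[of N] by (intro mult_left_mono) auto
    moreover have "2 * M * (1/2::real)^N = 2 * ((1/2)^N * M)" by simp
    ultimately show "pair (F (acc N) N (cs N)) \<psi> \<le> E + 2 * M * (1/2)^N" by linarith
  qed
  have dN: "\<Psi> (F (acc k) k (cs k)) \<le> E + \<eta> k + 2 * M * (1/2)^N" if "k \<le> N" for k N
  proof -
    define t where "t i = 2^k * (if i = N then (1/2::real)^N else w i)" for i
    define d where "d = (\<lambda>n. \<Sum>i\<in>{k..N}. t i * cs i n)"
    have dC: "d \<in> Conv k" unfolding d_def
    proof (rule Conv_comb)
      show "cs i \<in> Conv k" if "i \<in> {k..N}" for i using Conv_mono[OF csC, of k i] that by simp
      show "0 \<le> t i" for i unfolding t_def w_def by simp
      have "(\<Sum>i\<in>{k..N}. t i) = (\<Sum>i\<in>{k..<N}. t i) + t N"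
        using that by (simp add: atLeastLessThanSuc_atLeastAtMost[symmetric])
      also have "\<dots> = 2^k * ((\<Sum>i\<in>{k..<N}. (1/2::real)^(Suc i)) + (1/2)^N)"
        unfolding t_def w_def by (simp add: sum_distrib_left distrib_left)
      also have "\<dots> = 1" using geo_w2[OF that] by (simp add: power_mult_distrib[symmetric])
      finally show "(\<Sum>i\<in>{k..N}. t i) = 1" .
    qed simp
    have "F (acc k) k d = F (acc N) N (cs N)"
    proof
      fix n
      have s1: "acc N n = acc k n + (\<Sum>i\<in>{k..<N}. w i * cs i n)"
        unfolding acc_sum using that
        by (metis atLeast0LessThan sum.atLeastLessThan_concat zero_le)
      have s2: "d n = 2^k * ((\<Sum>i\<in>{k..<N}. w i * cs i n) + (1/2)^N * cs N n)"
        unfolding d_def t_def using that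
        by (simp add: atLeastLessThanSuc_atLeastAtMost[symmetric] sum_distrib_left distrib_left mult.assoc)
      show "F (acc k) k d n = F (acc N) N (cs N) n"
        unfolding F_def s1 s2 by (simp add: mult.assoc[symmetric] power_mult_distrib[symmetric])
    qed
    then have "\<Psi> (F (acc k) k (cs k)) \<le> \<Psi> (F (acc N) N (cs N)) + \<eta> k" using csopt[OF dC] by simp
    then show ?thesis using PsiG[of N] by linarith
  qed
  have PsiE: "\<Psi> (F (acc k) k (cs k)) \<le> E + \<eta> k" for k
  proof (rule ccontr)
    assume "\<not> ?thesis"
    then have gap: "\<Psi> (F (acc k) k (cs k)) - (E + \<eta> k) > 0" by simp
    have "(\<lambda>N. 2 * M * (1/2::real)^N) \<longlonglongrightarrow> 0"
      by (intro tendsto_mult_right_zero LIMSEQ_power_zero) simp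
    then obtain N0 where N0: "\<And>N. N \<ge> N0 \<Longrightarrow> \<bar>2 * M * (1/2::real)^N\<bar> < \<Psi> (F (acc k) k (cs k)) - (E + \<eta> k)"
      using LIMSEQ_D[OF _ gap] by fastforce
    have "\<bar>2 * M * (1/2::real)^(max N0 k)\<bar> < \<Psi> (F (acc k) k (cs k)) - (E + \<eta> k)" using N0 by simp
    moreover have "\<Psi> (F (acc k) k (cs k)) \<le> E + \<eta> k + 2 * M * (1/2)^(max N0 k)" using dN by simp
    ultimately show False by linarith
  qed
  have ue: "u k \<le> Tk k + \<delta> * (1/2)^k" for k
  proof -
    have "pair (F (acc k) k (cs k)) \<phi> \<le> \<Psi> (F (acc k) k (cs k))" by (rule \<Psi>_upper[OF GC \<phi>T])
    then have "(\<Sum>i<k. w i * u i) + (1/2)^k * u k \<le> (\<Sum>i<k. w i * u i) + (1/2)^k * Tk k + \<eta> k"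
      using PsiE[of k] Ea[of k] unfolding pairG u_def by linarith
    then have "(1/2::real)^k * u k \<le> (1/2)^k * (Tk k + \<delta> * (1/2)^k)"
      unfolding \<eta>_def by (simp add: algebra_simps)
    then show ?thesis by (rule mult_left_le_imp_le) simp
  qed
  have Tlow: "Tk k \<ge> E - 2 * \<delta> * (1 - (1/2)^k)" for k
  proof (induction k)
    case 0 then show ?case using Ea[of 0] by simp
  next
    case (Suc k)
    have "Tk (Suc k) = 2 * Tk k - u k" using Tb[of k] by simp
    then show ?case using Suc ue[of k] by (simp add: algebra_simps)
  qed
  have Esmall: "E \<le> 2 * \<delta>"
  proof (rule field_le_epsilon)
    fix \<theta> :: real assume \<theta>: "\<theta> > 0"
    obtain K where K: "\<And>n. n \<ge> K \<Longrightarrow> \<bar>\<phi> n\<bar> < \<theta>"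
      using LIMSEQ_D[OF nul[OF \<phi>T] \<theta>] by fastforce
    have "u (j + K) \<le> \<theta>" for j unfolding u_def
    proof (rule Conv_le[OF csC])
      fix n assume "j + K \<le> n" then show "\<phi> n \<le> \<theta>" using K[of n] by simp
    qed
    then have "Tk K \<le> \<theta>" unfolding Tk_def by (intro Ser_le[of _ M]) (use ub in auto)
    moreover have "2 * \<delta> * (1 - (1/2::real)^K) \<le> 2 * \<delta>" using \<delta> by simp
    ultimately show "E \<le> 2 * \<delta> + \<theta>" using Tlow[of K] by linarith
  qed
  have F0: "F (acc 0) 0 (cs 0) = cs 0" unfolding F_def acc0 by simp
  show ?thesis
  proof (intro bexI[of _ "cs 0"] ballI)
    fix \<psi> assume "\<psi> \<in> T"
    have "pair (cs 0) \<psi> \<le> \<Psi> (cs 0)" by (rule \<Psi>_upper[OF csC \<open>\<psi> \<in> T\<close>])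
    also have "\<dots> \<le> E + \<eta> 0" using PsiE[of 0] unfolding F0 .
    also have "\<dots> \<le> \<epsilon>" using Esmall unfolding \<eta>_def \<delta>_def by simp
    finally show "pair (cs 0) \<psi> \<le> \<epsilon>" .
  qed (rule csC)
qed


definition Nb :: "(nat \<Rightarrow> real) \<Rightarrow> nat" where
  "Nb c = (SOME N. \<forall>n\<ge>N. c n = 0)"

lemma Nb_spec: "fs c \<Longrightarrow> n \<ge> Nb c \<Longrightarrow> c n = 0"
proof -
  assume "fs c" "n \<ge> Nb c"
  have "\<forall>n\<ge>Nb c. c n = 0" unfolding Nb_def by (rule someI_ex) (use \<open>fs c\<close> in \<open>unfold fs_def\<close>)
  then show ?thesis using \<open>n \<ge> Nb c\<close> by blast
qed

definition Wv :: "(nat \<Rightarrow> 'a::real_normed_vector) \<Rightarrow> (nat \<Rightarrow> real) \<Rightarrow> nat set \<Rightarrow> 'a" where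
  "Wv v c A = (\<Sum>n<Nb c. (if n \<in> A then c n else 0) *\<^sub>R v n)"

lemma Conv_fs: "c \<in> Conv k \<Longrightarrow> fs c" unfolding Conv_def by blast

lemma Conv_sum1: "c \<in> Conv k \<Longrightarrow> (\<Sum>n<Nb c. c n) = 1"
proof -
  assume c: "c \<in> Conv k"
  have "pair c (\<lambda>_. 1) = (\<Sum>n<Nb c. c n * 1)" by (rule pair_eq_sum) (rule Nb_spec[OF Conv_fs[OF c]])
  then show ?thesis using c unfolding Conv_def by simp
qed

lemma Conv_nonneg: "c \<in> Conv k \<Longrightarrow> 0 \<le> c n" unfolding Conv_def by blast

lemma Conv_le1: "c \<in> Conv k \<Longrightarrow> c n \<le> 1"
proof -
  assume c: "c \<in> Conv k"
  show ?thesis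
  proof (cases "n < Nb c")
    case True
    have "c n \<le> (\<Sum>m<Nb c. c m)" by (rule member_le_sum) (use True Conv_nonneg[OF c] in auto)
    then show ?thesis using Conv_sum1[OF c] by simp
  next
    case False then show ?thesis using Nb_spec[OF Conv_fs[OF c]] by simp
  qed
qed

lemma Wv_bound:
  assumes c: "c \<in> Conv k" and vb: "\<And>n. norm (v n) \<le> M"
  shows "norm (Wv v c A) \<le> M"
proof -
  have "norm (Wv v c A) \<le> (\<Sum>n<Nb c. norm ((if n \<in> A then c n else 0) *\<^sub>R v n))"
    unfolding Wv_def by (rule norm_sum)
  also have "\<dots> \<le> (\<Sum>n<Nb c. c n * M)"
  proof (rule sum_mono)
    fix n
    have "norm ((if n \<in> A then c n else 0) *\<^sub>R v n) \<le> c n * norm (v n)"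
      using Conv_nonneg[OF c, of n] by (auto intro: mult_nonneg_nonneg)
    also have "\<dots> \<le> c n * M" by (rule mult_left_mono[OF vb Conv_nonneg[OF c]])
    finally show "norm ((if n \<in> A then c n else 0) *\<^sub>R v n) \<le> c n * M" .
  qed
  also have "\<dots> = (\<Sum>n<Nb c. c n) * M" by (rule sum_distrib_right[symmetric])
  also have "\<dots> = M" using Conv_sum1[OF c] by simp
  finally show ?thesis .
qed

lemma Wv_agree:
  assumes "\<And>n. n < K \<Longrightarrow> (n \<in> A) = (n \<in> B)" "Nb c \<le> K"
  shows "Wv v c A = Wv v c B"
  unfolding Wv_def by (rule sum.cong) (use assms in auto)

lemma Wv_lin:
  assumes c: "c \<in> Conv k" and f: "bounded_linear f"
  shows "f (Wv v c A) = pair c (\<lambda>n. if n \<in> A then f (v n) else 0)"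
proof -
  have "pair c (\<lambda>n. if n \<in> A then f (v n) else 0) = (\<Sum>n<Nb c. c n * (if n \<in> A then f (v n) else 0))"
    by (rule pair_eq_sum) (rule Nb_spec[OF Conv_fs[OF c]])
  also have "\<dots> = (\<Sum>n<Nb c. f ((if n \<in> A then c n else 0) *\<^sub>R v n))"
    by (rule sum.cong) (use linear_scale[OF bounded_linear.linear[OF f]] in auto)
  also have "\<dots> = f (Wv v c A)" unfolding Wv_def
    by (rule linear_sum[OF bounded_linear.linear[OF f], symmetric])
  finally show ?thesis by simp
qed

lemma greedy_max:
  fixes Z :: "nat set \<Rightarrow> real"
  assumes bd: "\<And>A. Z A \<le> B"
    and md: "\<And>\<eta>. \<eta> > 0 \<Longrightarrow> \<exists>K. \<forall>A A'. (\<forall>n<K. (n\<in>A) = (n\<in>A')) \<longrightarrow> \<bar>Z A - Z A'\<bar> \<le> \<eta>"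
  shows "\<exists>A0. \<forall>A. Z A \<le> Z A0"
proof -
  define S where "S = (SUP A. Z A)"
  have bdd: "bdd_above (range Z)" using bd by (auto simp: bdd_above_def)
  have upper: "Z A \<le> S" for A unfolding S_def by (rule cSUP_upper[OF _ bdd]) simp
  have approx: "\<exists>A. Z A > S - \<eta>" if "\<eta> > 0" for \<eta>
  proof -
    have "S - \<eta> < (SUP A. Z A)" using that unfolding S_def by simp
    then show ?thesis using less_cSUP_iff[OF _ bdd] by blast
  qed
  define good where "good K P \<longleftrightarrow> (\<forall>\<eta>>0. \<exists>A. (\<forall>n<K. (n\<in>A) = (n\<in>P)) \<and> Z A > S - \<eta>)" for K P
  have good0: "good 0 P" for P unfolding good_def using approx by simp
  have step: "good (Suc K) (insert K P) \<or> good (Suc K) (P - {K})" if g: "good K P" for K P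
  proof (rule ccontr)
    assume "\<not> ?thesis"
    then have n1: "\<not> good (Suc K) (insert K P)" and n2: "\<not> good (Suc K) (P - {K})" by auto
    from n1 obtain \<eta>1 where e1: "\<eta>1 > 0" "\<forall>A. (\<forall>n<Suc K. (n\<in>A) = (n\<in>insert K P)) \<longrightarrow> \<not> Z A > S - \<eta>1"
      unfolding good_def by blast
    from n2 obtain \<eta>2 where e2: "\<eta>2 > 0" "\<forall>A. (\<forall>n<Suc K. (n\<in>A) = (n\<in>P - {K})) \<longrightarrow> \<not> Z A > S - \<eta>2"
      unfolding good_def by blast
    have "min \<eta>1 \<eta>2 > 0" using e1(1) e2(1) by simp
    with g obtain A where A: "\<forall>n<K. (n\<in>A) = (n\<in>P)" "Z A > S - min \<eta>1 \<eta>2"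
      unfolding good_def by blast
    show False
    proof (cases "K \<in> A")
      case True
      have "\<forall>n<Suc K. (n\<in>A) = (n\<in>insert K P)" using A(1) True less_Suc_eq by auto
      then have "\<not> Z A > S - \<eta>1" using e1(2) by blast
      then show False using A(2) by linarith
    next
      case False
      have "\<forall>n<Suc K. (n\<in>A) = (n\<in>P - {K})" using A(1) False less_Suc_eq by auto
      then have "\<not> Z A > S - \<eta>2" using e2(2) by blast
      then show False using A(2) by linarith
    qed
  qed
  define Ps where "Ps = rec_nat {} (\<lambda>K P. if good (Suc K) (insert K P) then insert K P else P - {K})"
  have Ps0: "Ps 0 = {}" unfolding Ps_def by simp
  have PsS: "Ps (Suc K) = (if good (Suc K) (insert K (Ps K)) then insert K (Ps K) else Ps K - {K})" for K
    unfolding Ps_def by simp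
  have Psg: "good K (Ps K)" for K
  proof (induction K)
    case 0 then show ?case using good0 by simp
  next
    case (Suc K) then show ?case using step[OF Suc] unfolding PsS by auto
  qed
  have stab: "n < K \<Longrightarrow> (n \<in> Ps K) = (n \<in> Ps (Suc n))" for n K
  proof (induction K)
    case 0 then show ?case by simp
  next
    case (Suc K)
    show ?case
    proof (cases "n < K")
      case True
      then have "(n \<in> Ps (Suc K)) = (n \<in> Ps K)" unfolding PsS by auto
      then show ?thesis using Suc.IH[OF True] by simp
    next
      case False then have "n = K" using Suc.prems by simp
      then show ?thesis by simp
    qed
  qed
  define A0 where "A0 = {n. n \<in> Ps (Suc n)}"
  have agree: "\<forall>n<K. (n\<in>A0) = (n\<in>Ps K)" for K unfolding A0_def using stab by blast
  have "S \<le> Z A0"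
  proof (rule field_le_epsilon)
    fix e :: real assume e: "e > 0"
    obtain K where K: "\<And>A A'. (\<forall>n<K. (n\<in>A) = (n\<in>A')) \<Longrightarrow> \<bar>Z A - Z A'\<bar> \<le> e/2"
      using md[of "e/2"] e by auto
    obtain A where A: "\<forall>n<K. (n\<in>A) = (n\<in>Ps K)" "Z A > S - e/2"
      using Psg[of K] e unfolding good_def by (meson half_gt_zero)
    have "\<forall>n<K. (n\<in>A) = (n\<in>A0)" using A(1) agree[of K] by simp
    then have "\<bar>Z A - Z A0\<bar> \<le> e/2" by (rule K)
    then show "S \<le> Z A0 + e" using A(2) by linarith
  qed
  then show ?thesis using upper by (intro exI[of _ A0]) (blast intro: order_trans)
qed

definition zz :: "(nat \<Rightarrow> 'a::banach) \<Rightarrow> (nat \<Rightarrow> nat \<Rightarrow> real) \<Rightarrow> nat set \<Rightarrow> 'a" where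
  "zz v cs A = (\<Sum>i. (1/2::real)^(Suc i) *\<^sub>R Wv v (cs i) A)"

lemma zz_summable:
  fixes v :: "nat \<Rightarrow> 'a::banach"
  assumes csC: "\<And>i. cs i \<in> Conv i" and vb: "\<And>n. norm (v n) \<le> M"
  shows "summable (\<lambda>i. (1/2::real)^(Suc i) *\<^sub>R Wv v (cs i) A)"
proof (rule summable_comparison_test[of _ "\<lambda>i. M * (1/2)^(Suc i)"])
  have "norm ((1/2::real)^(Suc i) *\<^sub>R Wv v (cs i) A) \<le> M * (1/2)^(Suc i)" for i
    using Wv_bound[OF csC[of i] vb, where A=A] by (simp add: mult.commute mult_left_mono)
  then show "\<exists>N. \<forall>n\<ge>N. norm ((1/2::real)^(Suc n) *\<^sub>R Wv v (cs n) A) \<le> M * (1/2)^(Suc n)" by blast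
  show "summable (\<lambda>i. M * (1/2::real)^(Suc i))" by (intro summable_mult) simp
qed

lemma zz_lin:
  fixes v :: "nat \<Rightarrow> 'a::banach"
  assumes csC: "\<And>i. cs i \<in> Conv i" and vb: "\<And>n. norm (v n) \<le> M" and f: "bounded_linear f"
  shows "f (zz v cs A) = Ser (\<lambda>i. pair (cs i) (\<lambda>n. if n \<in> A then f (v n) else 0))"
proof -
  have "f (zz v cs A) = (\<Sum>i. f ((1/2::real)^(Suc i) *\<^sub>R Wv v (cs i) A))"
    unfolding zz_def by (rule bounded_linear.suminf[OF f zz_summable[OF csC vb]])
  also have "\<dots> = (\<Sum>i. (1/2::real)^(Suc i) * pair (cs i) (\<lambda>n. if n \<in> A then f (v n) else 0))"
    using Wv_lin[OF csC f] linear_scale[OF bounded_linear.linear[OF f]] by simp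
  finally show ?thesis unfolding Ser_def .
qed

lemma zz_diff:
  fixes v :: "nat \<Rightarrow> 'a::banach"
  assumes csC: "\<And>i. cs i \<in> Conv i" and vb: "\<And>n. norm (v n) \<le> M"
    and eq: "\<And>i. i < I \<Longrightarrow> Wv v (cs i) A = Wv v (cs i) B"
  shows "norm (zz v cs A - zz v cs B) \<le> 2 * M * (1/2)^I"
proof -
  define D where "D i = (1/2::real)^(Suc i) *\<^sub>R (Wv v (cs i) A - Wv v (cs i) B)" for i
  have sD: "summable D" unfolding D_def scaleR_diff_right
    by (intro summable_diff zz_summable[OF csC vb])
  have "zz v cs A - zz v cs B = suminf D" unfolding zz_def D_def scaleR_diff_right
    by (rule suminf_diff) (intro zz_summable[OF csC vb])+
  also have "\<dots> = (\<Sum>j. D (j + I)) + (\<Sum>i<I. D i)" by (rule suminf_split_initial_segment[OF sD])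
  also have "(\<Sum>i<I. D i) = 0" unfolding D_def using eq by simp
  finally have e: "zz v cs A - zz v cs B = (\<Sum>j. D (j + I))" by simp
  have gs: "summable (\<lambda>j. (2 * M * (1/2)^I) * (1/2::real)^(Suc j))" by (intro summable_mult) simp
  have "norm (\<Sum>j. D (j + I)) \<le> (\<Sum>j. (2 * M * (1/2)^I) * (1/2::real)^(Suc j))"
  proof (rule norm_suminf_le[OF _ gs])
    fix j
    have b1: "norm (Wv v (cs (j+I)) A) \<le> M" by (rule Wv_bound[OF csC]) (rule vb)
    have b2: "norm (Wv v (cs (j+I)) B) \<le> M" by (rule Wv_bound[OF csC]) (rule vb)
    have "norm (Wv v (cs (j+I)) A - Wv v (cs (j+I)) B) \<le> 2 * M"
      using norm_triangle_ineq4[of "Wv v (cs (j+I)) A" "Wv v (cs (j+I)) B"] b1 b2 by linarith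
    then have m: "(1/2::real)^(Suc (j+I)) * norm (Wv v (cs (j+I)) A - Wv v (cs (j+I)) B) \<le> (1/2)^(Suc (j+I)) * (2 * M)"
      by (intro mult_left_mono) auto
    have "norm (D (j + I)) = (1/2::real)^(Suc (j+I)) * norm (Wv v (cs (j+I)) A - Wv v (cs (j+I)) B)"
      unfolding D_def by simp
    also have "\<dots> \<le> (1/2)^(Suc (j+I)) * (2 * M)" by (rule m)
    also have "(1/2::real)^(Suc (j+I)) * (2 * M) = (2 * M * (1/2)^I) * (1/2::real)^(Suc j)"
      by (simp add: power_add)
    finally show "norm (D (j + I)) \<le> (2 * M * (1/2)^I) * (1/2::real)^(Suc j)" .
  qed
  also have "\<dots> = 2 * M * (1/2)^I" using suminf_mult[of "\<lambda>j. (1/2::real)^(Suc j)" "2 * M * (1/2)^I"] half_sum by simp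
  finally show ?thesis using e by simp
qed

lemma zz_mod:
  fixes v :: "nat \<Rightarrow> 'a::banach"
  assumes csC: "\<And>i. cs i \<in> Conv i" and vb: "\<And>n. norm (v n) \<le> M" and \<eta>: "\<eta> > 0"
  shows "\<exists>K. \<forall>A B. (\<forall>n<K. (n\<in>A) = (n\<in>B)) \<longrightarrow> \<bar>norm (zz v cs A) - norm (zz v cs B)\<bar> \<le> \<eta>"
proof -
  have "(\<lambda>I. 2 * \<bar>M\<bar> * (1/2::real)^I) \<longlonglongrightarrow> 0"
    by (intro tendsto_mult_right_zero LIMSEQ_power_zero) simp
  from LIMSEQ_D[OF this \<eta>] obtain I where "\<forall>n\<ge>I. norm (2 * \<bar>M\<bar> * (1/2::real)^n - 0) < \<eta>" by blast
  then have I: "\<bar>2 * \<bar>M\<bar> * (1/2::real)^I\<bar> < \<eta>" by simp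
  define K where "K = (\<Sum>i<I. Nb (cs i))"
  have "\<bar>norm (zz v cs A) - norm (zz v cs B)\<bar> \<le> \<eta>" if ag: "\<forall>n<K. (n\<in>A) = (n\<in>B)" for A B
  proof -
    have "Wv v (cs i) A = Wv v (cs i) B" if "i < I" for i
    proof (rule Wv_agree)
      show "Nb (cs i) \<le> K" unfolding K_def by (rule member_le_sum) (use that in auto)
    qed (use ag in blast)
    then have "norm (zz v cs A - zz v cs B) \<le> 2 * M * (1/2)^I" by (rule zz_diff[OF csC vb])
    moreover have "2 * M * (1/2::real)^I \<le> \<bar>2 * \<bar>M\<bar> * (1/2::real)^I\<bar>" by (simp add: abs_mult)
    ultimately show ?thesis using I norm_triangle_ineq3[of "zz v cs A" "zz v cs B"] by linarith
  qed
  then show ?thesis by blast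
qed


lemma pair_delta: "fs c \<Longrightarrow> pair c (\<lambda>n. if n = n0 then 1 else 0) = c n0"
  unfolding pair_def by (subst suminf_finite[of "{n0}"]) auto

lemma lam_small:
  assumes csC: "\<And>i. cs i \<in> Conv i" and \<theta>: "\<theta> > 0"
  shows "\<exists>K. \<forall>n\<ge>K. Ser (\<lambda>i. cs i n) \<le> \<theta>"
proof -
  have "(\<lambda>I. (1/2::real)^I) \<longlonglongrightarrow> 0" by (intro LIMSEQ_power_zero) simp
  from LIMSEQ_D[OF this \<theta>] obtain I where "\<forall>n\<ge>I. norm ((1/2::real)^n - 0) < \<theta>" by blast
  then have I: "(1/2::real)^I < \<theta>" by simp
  define K where "K = (\<Sum>i<I. Nb (cs i))"
  have "Ser (\<lambda>i. cs i n) \<le> \<theta>" if "n \<ge> K" for n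
  proof -
    have b: "\<bar>cs i n\<bar> \<le> 1" for i using Conv_le1[OF csC] Conv_nonneg[OF csC] by (simp add: abs_le_iff)
    have z: "cs i n = 0" if "i < I" for i
    proof (rule Nb_spec[OF Conv_fs[OF csC]])
      have "Nb (cs i) \<le> K" unfolding K_def by (rule member_le_sum) (use that in auto)
      then show "Nb (cs i) \<le> n" using \<open>n \<ge> K\<close> by simp
    qed
    have "Ser (\<lambda>i. cs i n) = (\<Sum>i<I. (1/2)^(Suc i) * cs i n) + (1/2)^I * Ser (\<lambda>i. cs (i + I) n)"
      by (rule Ser_split) (rule b)
    also have "(\<Sum>i<I. (1/2::real)^(Suc i) * cs i n) = 0" using z by simp
    also have "Ser (\<lambda>i. cs (i + I) n) \<le> 1" using Ser_bound[of "\<lambda>i. cs (i + I) n" 1] b by (simp add: abs_le_iff)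
    then have "(1/2::real)^I * Ser (\<lambda>i. cs (i + I) n) \<le> (1/2)^I * 1" by (intro mult_left_mono) auto
    finally show ?thesis using I by simp
  qed
  then show ?thesis by blast
qed

lemma lam_max:
  assumes csC: "\<And>i. cs i \<in> Conv i"
  shows "\<exists>m. \<forall>n. Ser (\<lambda>i. cs i n) \<le> Ser (\<lambda>i. cs i m)"
proof -
  define lam where "lam n = Ser (\<lambda>i. cs i n)" for n
  have nn: "lam n \<ge> 0" for n
  proof -
    have "Ser (\<lambda>i. - cs i n) \<le> 0"
      by (rule Ser_le[of _ 1]) (use Conv_le1[OF csC] Conv_nonneg[OF csC] in \<open>auto simp: abs_le_iff\<close>)
    moreover have "Ser (\<lambda>i. - cs i n) = - lam n" unfolding Ser_def lam_def
      using suminf_minus[OF Ser_summable[of "\<lambda>i. cs i n" 1]] Conv_le1[OF csC] Conv_nonneg[OF csC]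
      by (simp add: abs_le_iff)
    ultimately show ?thesis by simp
  qed
  show ?thesis
  proof (cases "\<exists>n1. lam n1 > 0")
    case False
    then have "lam n \<le> lam 0" for n using nn[of 0] by (metis not_less order_trans)
    then show ?thesis unfolding lam_def by blast
  next
    case True
    then obtain n1 where n1: "lam n1 > 0" by blast
    obtain K where K: "\<And>n. n \<ge> K \<Longrightarrow> lam n \<le> lam n1 / 2"
      using lam_small[OF csC, of "lam n1 / 2"] n1 unfolding lam_def by auto
    define K' where "K' = max K n1"
    have "Max (lam ` {..K'}) \<in> lam ` {..K'}" by (rule Max_in) auto
    then obtain m where m0: "m \<in> {..K'}" "Max (lam ` {..K'}) = lam m" by blast
    then have m: "m \<in> {..K'}" "lam m = Max (lam ` {..K'})" by simp_all
    have "lam n \<le> lam m" for n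
    proof (cases "n \<le> K'")
      case True then show ?thesis unfolding m(2) by (intro Max_ge) auto
    next
      case False
      then have "lam n \<le> lam n1 / 2" using K K'_def by simp
      moreover have "lam n1 \<le> lam m" unfolding m(2) K'_def by (intro Max_ge) auto
      ultimately show ?thesis using n1 by simp
    qed
    then show ?thesis unfolding lam_def by blast
  qed
qed

lemma zz_bound:
  fixes v :: "nat \<Rightarrow> 'a::banach"
  assumes csC: "\<And>i. cs i \<in> Conv i" and vb: "\<And>n. norm (v n) \<le> M"
  shows "norm (zz v cs A) \<le> M"
proof -
  have s: "summable (\<lambda>i. M * (1/2::real)^(Suc i))" by (intro summable_mult) simp
  have "norm (zz v cs A) \<le> (\<Sum>i. M * (1/2::real)^(Suc i))" unfolding zz_def
  proof (rule norm_suminf_le[OF _ s])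
    fix i
    have "norm (Wv v (cs i) A) \<le> M" by (rule Wv_bound[OF csC]) (rule vb)
    then have "(1/2::real)^(Suc i) * norm (Wv v (cs i) A) \<le> (1/2)^(Suc i) * M" by (intro mult_left_mono) auto
    then show "norm ((1/2::real)^(Suc i) *\<^sub>R Wv v (cs i) A) \<le> M * (1/2)^(Suc i)" by (simp add: mult.commute)
  qed
  also have "\<dots> = M" using suminf_mult[of "\<lambda>i. (1/2::real)^(Suc i)" M] half_sum by simp
  finally show ?thesis .
qed

theorem lemma19:
  fixes v :: "nat \<Rightarrow> 'a::banach"
  assumes "weakly_null v"
    and "(\<epsilon>::real) > 0"
  shows "\<exists>(j::nat) (k::nat \<Rightarrow> nat) (lam::nat \<Rightarrow> real).
           strict_mono_on {0..j} k \<and>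
           (\<forall>i\<in>{0..j}. lam i \<ge> 0) \<and>
           (\<Sum>i=0..j. lam i) = 1 \<and>
           (\<forall>i\<in>{0..j}. lam i \<le> \<epsilon>) \<and>
           (\<forall>F. F \<subseteq> {0..j} \<longrightarrow> norm (\<Sum>i\<in>F. lam i *\<^sub>R v (k i)) \<le> \<epsilon>)"
proof -
  note wn = assms(1) and eps = assms(2)
  obtain M0 where M0: "\<And>n. norm (v n) \<le> M0" using weakly_null_bounded[OF wn] by blast
  define M where "M = max M0 1"
  have vb: "norm (v n) \<le> M" for n using M0[of n] unfolding M_def by simp
  have M1: "1 \<le> M" unfolding M_def by simp
  define T1 where "T1 = {\<phi>. \<exists>A f. bounded_linear f \<and> (\<forall>x. \<bar>f x\<bar> \<le> norm x) \<and> \<phi> = (\<lambda>n. if n \<in> A then f (v n) else 0)}"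
  define T2 where "T2 = range (\<lambda>n0::nat. (\<lambda>n::nat. if n = n0 then 1 else (0::real)))"
  define T where "T = T1 \<union> T2"
  have "\<exists>c\<in>Conv 0. \<forall>\<phi>\<in>T. pair c \<phi> \<le> \<epsilon>"
  proof (rule simons[where M=M])
    show "T \<noteq> {}" unfolding T_def T2_def by blast
  next
    fix \<phi> n assume "\<phi> \<in> T"
    then show "\<bar>\<phi> n\<bar> \<le> M"
    proof (unfold T_def, elim UnE)
      assume "\<phi> \<in> T1"
      then obtain A f where f: "\<forall>x. \<bar>f x\<bar> \<le> norm x" and \<phi>: "\<phi> = (\<lambda>n. if n \<in> A then f (v n) else 0)"
        unfolding T1_def by blast
      show ?thesis unfolding \<phi> using f[rule_format, of "v n"] vb[of n] M1 by auto
    next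
      assume "\<phi> \<in> T2" then show ?thesis unfolding T2_def using M1 by auto
    qed
  next
    fix \<phi> assume "\<phi> \<in> T"
    then show "\<phi> \<longlonglongrightarrow> 0"
    proof (unfold T_def, elim UnE)
      assume "\<phi> \<in> T1"
      then obtain A f where bl: "bounded_linear f" and \<phi>: "\<phi> = (\<lambda>n. if n \<in> A then f (v n) else 0)"
        unfolding T1_def by blast
      have t: "(\<lambda>n. \<bar>f (v n)\<bar>) \<longlonglongrightarrow> 0" using tendsto_rabs_zero[OF weakly_nullD[OF wn bl]] .
      show ?thesis unfolding \<phi> by (rule Lim_null_comparison[OF _ t]) (auto intro!: always_eventually)
    next
      assume "\<phi> \<in> T2"
      then obtain n0 where \<phi>: "\<phi> = (\<lambda>n. if n = n0 then 1 else 0)" unfolding T2_def by blast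
      have "eventually (\<lambda>n. \<phi> n = 0) sequentially" unfolding \<phi> eventually_sequentially
        by (intro exI[of _ "Suc n0"]) auto
      then show ?thesis by (rule tendsto_eventually)
    qed
  next
    fix cs assume csC: "\<And>i. cs i \<in> Conv i"
    define Z where "Z A = norm (zz v cs A)" for A
    obtain A0 where A0: "\<And>A. Z A \<le> Z A0"
    proof -
      have "\<exists>A0. \<forall>A. Z A \<le> Z A0"
      proof (rule greedy_max)
        show "Z A \<le> M" for A unfolding Z_def by (rule zz_bound[OF csC vb])
        show "\<exists>K. \<forall>A A'. (\<forall>n<K. (n\<in>A) = (n\<in>A')) \<longrightarrow> \<bar>Z A - Z A'\<bar> \<le> \<eta>" if "\<eta> > 0" for \<eta>
          unfolding Z_def by (rule zz_mod[OF csC vb that])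
      qed
      then show ?thesis using that by blast
    qed
    obtain f0 where f0: "bounded_linear f0" "\<forall>x. \<bar>f0 x\<bar> \<le> norm x" "f0 (zz v cs A0) = norm (zz v cs A0)"
      using hahn_banach_norming by blast
    obtain m where m: "\<And>n. Ser (\<lambda>i. cs i n) \<le> Ser (\<lambda>i. cs i m)" using lam_max[OF csC] by blast
    have SerT1: "Ser (\<lambda>i. pair (cs i) \<psi>) \<le> Z A0" if psiT: "\<psi> \<in> T1" for \<psi>
    proof -
      obtain A f where bl: "bounded_linear f" and f: "\<forall>x. \<bar>f x\<bar> \<le> norm x" and \<psi>: "\<psi> = (\<lambda>n. if n \<in> A then f (v n) else 0)"
        using psiT unfolding T1_def by blast
      have "Ser (\<lambda>i. pair (cs i) \<psi>) = f (zz v cs A)" unfolding \<psi> by (rule zz_lin[OF csC vb bl, symmetric])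
      also have "\<dots> \<le> Z A" unfolding Z_def using f by (metis abs_le_iff)
      also have "\<dots> \<le> Z A0" by (rule A0)
      finally show ?thesis .
    qed
    have SerT2: "Ser (\<lambda>i. pair (cs i) \<psi>) = Ser (\<lambda>i. cs i n0)" if "\<psi> = (\<lambda>n. if n = n0 then 1 else 0)" for \<psi> n0
      unfolding that using pair_delta[OF Conv_fs[OF csC]] by simp
    have phi1: "(\<lambda>n. if n \<in> A0 then f0 (v n) else 0) \<in> T1" unfolding T1_def using f0 by blast
    have Ser1: "Ser (\<lambda>i. pair (cs i) (\<lambda>n. if n \<in> A0 then f0 (v n) else 0)) = Z A0"
      unfolding Z_def using zz_lin[OF csC vb f0(1), where A=A0] f0(3) by simp
    have phi2: "(\<lambda>n. if n = m then 1 else 0) \<in> T2" unfolding T2_def by blast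
    show "\<exists>\<phi>\<in>T. \<forall>\<psi>\<in>T. Ser (\<lambda>i. pair (cs i) \<psi>) \<le> Ser (\<lambda>i. pair (cs i) \<phi>)"
    proof (cases "Ser (\<lambda>i. cs i m) \<le> Z A0")
      case True
      note mT = True
      show ?thesis
      proof (intro bexI[of _ "(\<lambda>n. if n \<in> A0 then f0 (v n) else 0)"] ballI)
        fix \<psi> assume "\<psi> \<in> T"
        show "Ser (\<lambda>i. pair (cs i) \<psi>) \<le> Ser (\<lambda>i. pair (cs i) (\<lambda>n. if n \<in> A0 then f0 (v n) else 0))"
        proof (cases "\<psi> \<in> T1")
          case True then show ?thesis using SerT1[OF True] Ser1 by linarith
        next
          case False
          then obtain n0 where "\<psi> = (\<lambda>n. if n = n0 then 1 else 0)" using \<open>\<psi> \<in> T\<close> unfolding T_def T2_def by blast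
          then have "Ser (\<lambda>i. pair (cs i) \<psi>) = Ser (\<lambda>i. cs i n0)" by (rule SerT2)
          then show ?thesis using m[of n0] mT Ser1 by linarith
        qed
      qed (use phi1 T_def in blast)
    next
      case False
      note mF = False
      show ?thesis
      proof (intro bexI[of _ "(\<lambda>n. if n = m then 1 else 0)"] ballI)
        fix \<psi> assume "\<psi> \<in> T"
        show "Ser (\<lambda>i. pair (cs i) \<psi>) \<le> Ser (\<lambda>i. pair (cs i) (\<lambda>n. if n = m then 1 else 0))"
        proof (cases "\<psi> \<in> T1")
          case True then show ?thesis using SerT1[OF True] mF SerT2[OF refl, of m] by linarith
        next
          case False
          then obtain n0 where "\<psi> = (\<lambda>n. if n = n0 then 1 else 0)" using \<open>\<psi> \<in> T\<close> unfolding T_def T2_def by blast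
          then have "Ser (\<lambda>i. pair (cs i) \<psi>) = Ser (\<lambda>i. cs i n0)" by (rule SerT2)
          then show ?thesis using m[of n0] SerT2[OF refl, of m] by linarith
        qed
      qed (use phi2 T_def in blast)
    qed
  qed (rule eps)
  then obtain c where cC: "c \<in> Conv 0" and cT: "\<And>\<phi>. \<phi> \<in> T \<Longrightarrow> pair c \<phi> \<le> \<epsilon>" by blast
  have fc: "fs c" by (rule Conv_fs[OF cC])
  define S where "S = {n. c n \<noteq> 0}"
  have Ssub: "S \<subseteq> {..<Nb c}"
  proof
    fix n assume "n \<in> S"
    then have "c n \<noteq> 0" unfolding S_def by simp
    then show "n \<in> {..<Nb c}" using Nb_spec[OF fc, of n] by (auto simp: not_less[symmetric])
  qed
  have finS: "finite S" by (rule finite_subset[OF Ssub]) simp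
  have sum1: "(\<Sum>n\<in>S. c n) = 1"
  proof -
    have "(\<Sum>n\<in>S. c n) = (\<Sum>n<Nb c. c n)"
      by (rule sum.mono_neutral_left) (use Ssub in \<open>auto simp: S_def\<close>)
    then show ?thesis using Conv_sum1[OF cC] by simp
  qed
  have Sne: "S \<noteq> {}" using sum1 by auto
  define xs where "xs = sorted_list_of_set S"
  have dxs: "distinct xs" unfolding xs_def by simp
  have sxs: "sorted_wrt (<) xs" unfolding xs_def by (rule strict_sorted_list_of_set)
  have setxs: "set xs = S" unfolding xs_def using finS by simp
  have lpos: "length xs \<ge> 1" using Sne setxs by (cases xs) auto
  define j where "j = length xs - 1"
  have jr: "{0..j} = {..<length xs}" unfolding j_def using lpos by auto
  define k where "k i = xs ! i" for i
  define lam where "lam i = c (xs ! i)" for i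
  have kS: "k i \<in> S" if "i < length xs" for i unfolding k_def using that setxs nth_mem by blast
  have bij: "bij_betw k {..<length xs} S" unfolding k_def
    by (rule bij_betw_nth[OF dxs refl setxs[symmetric]])
  have "strict_mono_on {0..j} k" unfolding strict_mono_on_def jr k_def
    using sorted_wrt_nth_less[OF sxs] by auto
  moreover have "\<forall>i\<in>{0..j}. lam i \<ge> 0" unfolding lam_def using Conv_nonneg[OF cC] by blast
  moreover have "(\<Sum>i=0..j. lam i) = 1"
  proof -
    have "(\<Sum>i=0..j. lam i) = (\<Sum>i<length xs. c (k i))" unfolding jr lam_def k_def ..
    also have "\<dots> = (\<Sum>n\<in>S. c n)" by (rule sum.reindex_bij_betw[OF bij])
    finally show ?thesis using sum1 by simp
  qed
  moreover have "\<forall>i\<in>{0..j}. lam i \<le> \<epsilon>"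
  proof
    fix i assume "i \<in> {0..j}"
    have "(\<lambda>n. if n = k i then 1 else 0) \<in> T" unfolding T_def T2_def by blast
    then have "pair c (\<lambda>n. if n = k i then 1 else 0) \<le> \<epsilon>" by (rule cT)
    then show "lam i \<le> \<epsilon>" unfolding pair_delta[OF fc] lam_def k_def .
  qed
  moreover have "\<forall>F. F \<subseteq> {0..j} \<longrightarrow> norm (\<Sum>i\<in>F. lam i *\<^sub>R v (k i)) \<le> \<epsilon>"
  proof (intro allI impI)
    fix F assume F: "F \<subseteq> {0..j}"
    define B where "B = k ` F"
    have injF: "inj_on k F" using bij F unfolding jr bij_betw_def by (blast intro: inj_on_subset)
    have BS: "B \<subseteq> S" unfolding B_def using F kS jr by auto
    have "(\<Sum>i\<in>F. lam i *\<^sub>R v (k i)) = (\<Sum>n\<in>B. c n *\<^sub>R v n)"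
      unfolding B_def lam_def k_def[symmetric] by (rule sum.reindex[OF injF, symmetric, simplified comp_def])
    also have "\<dots> = Wv v c B"
    proof -
      have "Wv v c B = (\<Sum>n<Nb c. if n \<in> B then c n *\<^sub>R v n else 0)" unfolding Wv_def
        by (rule sum.cong) auto
      also have "\<dots> = (\<Sum>n\<in>{..<Nb c} \<inter> B. c n *\<^sub>R v n)" by (rule sum.inter_restrict[symmetric]) simp
      also have "{..<Nb c} \<inter> B = B" using BS Ssub by auto
      finally show ?thesis by simp
    qed
    finally have w: "(\<Sum>i\<in>F. lam i *\<^sub>R v (k i)) = Wv v c B" .
    obtain f where f: "bounded_linear f" "\<forall>x. \<bar>f x\<bar> \<le> norm x" "f (Wv v c B) = norm (Wv v c B)"
      using hahn_banach_norming by blast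
    have "(\<lambda>n. if n \<in> B then f (v n) else 0) \<in> T" unfolding T_def T1_def using f by blast
    then have "pair c (\<lambda>n. if n \<in> B then f (v n) else 0) \<le> \<epsilon>" by (rule cT)
    then have "f (Wv v c B) \<le> \<epsilon>" using Wv_lin[OF cC f(1)] by simp
    then show "norm (\<Sum>i\<in>F. lam i *\<^sub>R v (k i)) \<le> \<epsilon>" using w f(3) by simp
  qed
  ultimately show ?thesis by blast
qed

end
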